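(* Let $K$ be a field, $n>0$, $B=K[x_1,\dots,x_n]$, and $\varphi:B\to B$ a $K$-algebra homomorphism. Let $d,r\in\mathbb{N}$ with $r>0$ and $h_1,\dots,h_r\in B_{\le d}$. Let $m>n+d$ be an integer and suppose there is no nontrivial relation $\varphi(b_1)h_1+\dots+\varphi(b_r)h_r=0$ with $b_1,\dots,b_r\in B_{\le m}$ not all zero. Then $m\,(r-\deg(\varphi)^n)<2^n\deg(\varphi)^{n-1}(n+d)$.
   Context: $\deg(\varphi)=\max\{\deg\varphi(x_1),\dots,\deg\varphi(x_n)\}$ with $\deg$ the total degree; $B_{\le d}$ is the $K$-subspace of polynomials of total degree $\le d$. *)

theory Defs
  imports Main "HOL-Library.Poly_Mapping"
begin

text \<open>Multivariate polynomials over a field K: finitely supported maps from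
monomials (finitely supported exponent vectors) to coefficients, with the
convolution product from Poly_Mapping.\<close>

type_synonym 'a mpoly = "(nat \<Rightarrow>\<^sub>0 nat) \<Rightarrow>\<^sub>0 'a"

text \<open>B = K[x_0,...,x_{n-1}]: polynomials involving only the first n variables.\<close>
definition polys_in :: "nat \<Rightarrow> ('a::zero) mpoly set" where
  "polys_in n = {p. \<forall>mo \<in> Poly_Mapping.keys p. Poly_Mapping.keys mo \<subseteq> {..<n}}"

definition mon_deg :: "(nat \<Rightarrow>\<^sub>0 nat) \<Rightarrow> nat" where
  "mon_deg mo = (\<Sum>i \<in> Poly_Mapping.keys mo. Poly_Mapping.lookup mo i)"

text \<open>Total degree (the zero polynomial gets degree 0).\<close>
definition tdeg :: "('a::zero) mpoly \<Rightarrow> nat" where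
  "tdeg p = Max (insert 0 (mon_deg ` Poly_Mapping.keys p))"

definition polys_le :: "nat \<Rightarrow> nat \<Rightarrow> ('a::zero) mpoly set" where
  "polys_le n d = {p \<in> polys_in n. tdeg p \<le> d}"

definition const_poly :: "'a::zero \<Rightarrow> 'a mpoly" where
  "const_poly c = Poly_Mapping.single 0 c"

definition Var :: "nat \<Rightarrow> ('a::{zero,one}) mpoly" where
  "Var i = Poly_Mapping.single (Poly_Mapping.single i 1) 1"

definition is_alg_endo :: "nat \<Rightarrow> (('a::field) mpoly \<Rightarrow> 'a mpoly) \<Rightarrow> bool" where
  "is_alg_endo n \<phi> \<longleftrightarrow>
     (\<forall>p \<in> polys_in n. \<phi> p \<in> polys_in n) \<and>
     (\<forall>p \<in> polys_in n. \<forall>q \<in> polys_in n. \<phi> (p + q) = \<phi> p + \<phi> q) \<and>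
     (\<forall>p \<in> polys_in n. \<forall>q \<in> polys_in n. \<phi> (p * q) = \<phi> p * \<phi> q) \<and>
     (\<forall>c. \<phi> (const_poly c) = const_poly c)"

definition endo_deg :: "nat \<Rightarrow> (('a::field) mpoly \<Rightarrow> 'a mpoly) \<Rightarrow> nat" where
  "endo_deg n \<phi> = Max (insert 0 ((\<lambda>i. tdeg (\<phi> (Var i))) ` {..<n}))"

end

theory Submission
  imports Defs Complex_Main
begin


lemma lin_solve:
  fixes A :: "'e \<Rightarrow> 'u \<Rightarrow> 'a::field"
  assumes "finite E" "finite U" "card E < card U"
  shows "\<exists>c. (\<exists>u\<in>U. c u \<noteq> 0) \<and> (\<forall>e\<in>E. (\<Sum>u\<in>U. A e u * c u) = 0)"
  using assms
proof (induction E arbitrary: U A rule: finite_induct)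
  case empty
  then obtain u where "u \<in> U" by fastforce
  then show ?case by (intro exI[of _ "\<lambda>v. if v = u then 1 else 0"]) auto
next
  case (insert e E U A)
  show ?case
  proof (cases "\<forall>u\<in>U. A e u = 0")
    case True
    have "card E < card U" using insert by simp
    from insert.IH[OF \<open>finite U\<close> this, of A] obtain c where
      c: "\<exists>u\<in>U. c u \<noteq> 0" "\<forall>e\<in>E. (\<Sum>u\<in>U. A e u * c u) = 0" by blast
    show ?thesis using c True by (intro exI[of _ c]) auto
  next
    case False
    then obtain u0 where u0: "u0 \<in> U" "A e u0 \<noteq> 0" by blast
    define U' where "U' = U - {u0}"
    have fU': "finite U'" using insert by (simp add: U'_def)
    have cU': "card E < card U'" using insert u0 by (simp add: U'_def)
    define A' where "A' = (\<lambda>x u. A x u - A x u0 * A e u / A e u0)"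
    from insert.IH[OF fU' cU', of A'] obtain c' where
      c': "\<exists>u\<in>U'. c' u \<noteq> 0" "\<forall>x\<in>E. (\<Sum>u\<in>U'. A' x u * c' u) = 0" by blast
    define S where "S = (\<Sum>v\<in>U'. A e v * c' v)"
    define c where "c = (\<lambda>u. if u = u0 then - S / A e u0 else c' u)"
    have split: "(\<Sum>u\<in>U. A x u * c u) = A x u0 * c u0 + (\<Sum>u\<in>U'. A x u * c' u)" for x
    proof -
      have "U = insert u0 U'" using u0 by (auto simp: U'_def)
      then have "(\<Sum>u\<in>U. A x u * c u) = A x u0 * c u0 + (\<Sum>u\<in>U'. A x u * c u)"
        using fU' u0 by (simp add: U'_def sum.remove[OF \<open>finite U\<close> \<open>u0 \<in> U\<close>])
      also have "(\<Sum>u\<in>U'. A x u * c u) = (\<Sum>u\<in>U'. A x u * c' u)"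
        by (rule sum.cong) (auto simp: c_def U'_def)
      finally show ?thesis .
    qed
    have "\<forall>x\<in>insert e E. (\<Sum>u\<in>U. A x u * c u) = 0"
    proof
      fix x assume "x \<in> insert e E"
      then consider "x = e" | "x \<in> E" by blast
      then show "(\<Sum>u\<in>U. A x u * c u) = 0"
      proof cases
        case 1
        have "c u0 = - S / A e u0" by (simp add: c_def)
        then show ?thesis using u0 1 split[of e] by (simp add: S_def)
      next
        case 2
        have "(\<Sum>u\<in>U'. A' x u * c' u) = (\<Sum>u\<in>U'. A x u * c' u) - A x u0 / A e u0 * S"
          by (simp add: A'_def S_def algebra_simps sum_subtractf sum_distrib_left)
        moreover have "c u0 = - S / A e u0" by (simp add: c_def)
        ultimately show ?thesis using c'(2) 2 split[of x] by (simp add: algebra_simps)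
      qed
    qed
    moreover have "\<exists>u\<in>U. c u \<noteq> 0" using c'(1) by (auto simp: c_def U'_def)
    ultimately show ?thesis by blast
  qed
qed



definition Fs :: "nat \<Rightarrow> nat \<Rightarrow> (nat \<Rightarrow> nat) set" where
  "Fs n k = {f. (\<forall>i\<ge>n. f i = 0) \<and> (\<Sum>i<n. f i) \<le> k}"

lemma choose_swap: "(a + b) choose a = (a + b) choose (b::nat)"
  using binomial_symmetric[of a "a+b"] by simp

lemma card_Fs: "card (Fs n k) = (k + n) choose n"
proof (induction n arbitrary: k)
  case 0
  have "Fs 0 k = {\<lambda>_. 0}" by (auto simp: Fs_def fun_eq_iff)
  then show ?case by simp
next
  case (Suc n)
  have fin: "finite (Fs n j)" for j
  proof -
    have "card (Fs n j) \<noteq> 0" using Suc.IH[of j] by simp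
    then show ?thesis by (meson card.infinite)
  qed
  have bij: "bij_betw (\<lambda>f. (f n, f(n:=0))) (Fs (Suc n) k) (Sigma {..k} (\<lambda>j. Fs n (k - j)))"
  proof (rule bij_betw_byWitness[where f' = "\<lambda>(j, g). g(n:=j)"])
    show "\<forall>a\<in>Fs (Suc n) k. (case (a n, a(n := 0)) of (j, g) \<Rightarrow> g(n := j)) = a" by auto
    show "\<forall>a'\<in>Sigma {..k} (\<lambda>j. Fs n (k - j)). (\<lambda>f. (f n, f(n := 0))) (case a' of (j, g) \<Rightarrow> g(n := j)) = a'"
    proof
      fix a' assume a': "a' \<in> Sigma {..k} (\<lambda>j. Fs n (k - j))"
      obtain j g where jg: "a' = (j, g)" by (cases a')
      have "g n = 0" using a' jg by (simp add: Fs_def)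
      then show "(\<lambda>f. (f n, f(n := 0))) (case a' of (j, g) \<Rightarrow> g(n := j)) = a'"
        using jg by (simp add: fun_upd_idem)
    qed
    have S: "\<And>g j. (\<Sum>i<n. (g(n:=j)) i) = (\<Sum>i<n. g i)" by (rule sum.cong) auto
    show "(\<lambda>f. (f n, f(n := 0))) ` Fs (Suc n) k \<subseteq> Sigma {..k} (\<lambda>j. Fs n (k - j))"
    proof
      fix x assume "x \<in> (\<lambda>f. (f n, f(n := 0))) ` Fs (Suc n) k"
      then obtain f where f: "f \<in> Fs (Suc n) k" and x: "x = (f n, f(n := 0))" by blast
      then have 1: "(\<Sum>i<n. f i) + f n \<le> k" by (simp add: Fs_def)
      have 2: "(\<Sum>i<n. (f(n:=0)) i) = (\<Sum>i<n. f i)" by (rule sum.cong) auto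
      have 3: "\<forall>i\<ge>n. (f(n:=0)) i = 0" using f by (simp add: Fs_def)
      show "x \<in> Sigma {..k} (\<lambda>j. Fs n (k - j))" unfolding x using 1 2 3
        by (simp add: Fs_def)
    qed
    show "(\<lambda>(j, g). g(n := j)) ` Sigma {..k} (\<lambda>j. Fs n (k - j)) \<subseteq> Fs (Suc n) k"
    proof
      fix x assume "x \<in> (\<lambda>(j, g). g(n := j)) ` Sigma {..k} (\<lambda>j. Fs n (k - j))"
      then obtain j g where jg0: "(j, g) \<in> Sigma {..k} (\<lambda>j. Fs n (k - j))" and x: "x = g(n := j)"
        by (auto simp del: SigmaE)
      then have jg: "j \<le> k" "g \<in> Fs n (k - j)" by auto
      have 2: "(\<Sum>i<n. (g(n:=j)) i) = (\<Sum>i<n. g i)" by (rule sum.cong) auto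
      have 3: "\<forall>i\<ge>Suc n. (g(n:=j)) i = 0" using jg by (simp add: Fs_def)
      have 4: "(\<Sum>i<n. g i) \<le> k - j" using jg by (simp add: Fs_def)
      show "x \<in> Fs (Suc n) k" unfolding x Fs_def using 2 3 4 jg(1) by simp
    qed
  qed
  have "card (Fs (Suc n) k) = card (Sigma {..k} (\<lambda>j. Fs n (k - j)))"
    using bij_betw_same_card[OF bij] .
  also have "\<dots> = (\<Sum>j\<le>k. card (Fs n (k - j)))"
    using fin by (simp add: card_SigmaI)
  also have "\<dots> = (\<Sum>j\<le>k. (k - j + n) choose n)" using Suc.IH by simp
  also have "\<dots> = (\<Sum>j\<le>k. (n + j) choose j)"
  proof -
    have "(\<Sum>j\<le>k. (k - j + n) choose n) = (\<Sum>j\<le>k. (j + n) choose n)"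
      by (rule sum.reindex_bij_witness[where i="\<lambda>j. k - j" and j="\<lambda>j. k - j"]) auto
    also have "\<dots> = (\<Sum>j\<le>k. (n + j) choose j)"
    proof (rule sum.cong[OF refl])
      fix j
      have "(j + n) choose n = (j + n) choose j" by (rule choose_swap[symmetric])
      then show "(j + n) choose n = (n + j) choose j" by (simp add: add.commute)
    qed
    finally show ?thesis .
  qed
  also have "\<dots> = Suc (n + k) choose k" by (rule sum_choose_lower)
  also have "\<dots> = (k + Suc n) choose Suc n"
    using choose_swap[of k "Suc n"] by (simp add: add.commute)
  finally show ?case .
qed



lemma mon_deg_sum: "finite S \<Longrightarrow> Poly_Mapping.keys mo \<subseteq> S \<Longrightarrow>
  mon_deg mo = (\<Sum>i\<in>S. Poly_Mapping.lookup mo i)"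
  unfolding mon_deg_def
  by (rule sum.mono_neutral_left) (auto simp: in_keys_iff)

lemma mon_deg_add: "mon_deg (a + b) = mon_deg a + mon_deg b"
proof -
  let ?S = "Poly_Mapping.keys a \<union> Poly_Mapping.keys b"
  have f: "finite ?S" by simp
  have "mon_deg (a + b) = (\<Sum>i\<in>?S. Poly_Mapping.lookup (a + b) i)"
    using keys_add[of a b] by (intro mon_deg_sum f) auto
  also have "\<dots> = (\<Sum>i\<in>?S. Poly_Mapping.lookup a i) + (\<Sum>i\<in>?S. Poly_Mapping.lookup b i)"
    by (simp add: lookup_add sum.distrib)
  also have "\<dots> = mon_deg a + mon_deg b"
    by (subst (1 2) mon_deg_sum[OF f]) auto
  finally show ?thesis .
qed

lemma mon_deg_single: "mon_deg (Poly_Mapping.single i 1) = 1"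
  by (simp add: mon_deg_def)

lemma tdeg_le_iff: "tdeg p \<le> k \<longleftrightarrow> (\<forall>mo\<in>Poly_Mapping.keys p. mon_deg mo \<le> k)"
  unfolding tdeg_def by (subst Max_le_iff) auto

lemma keys_mult_sub: "mo \<in> Poly_Mapping.keys (p * q) \<Longrightarrow>
   \<exists>a b. mo = a + b \<and> a \<in> Poly_Mapping.keys p \<and> b \<in> Poly_Mapping.keys q"
  using keys_mult[of p q] by blast

lemma polys_in_mult: "p \<in> polys_in n \<Longrightarrow> q \<in> polys_in n \<Longrightarrow> p * q \<in> polys_in n"
  unfolding polys_in_def mem_Collect_eq
proof (intro ballI subsetI)
  fix mo x assume p: "\<forall>mo\<in>Poly_Mapping.keys p. Poly_Mapping.keys mo \<subseteq> {..<n}"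
    and q: "\<forall>mo\<in>Poly_Mapping.keys q. Poly_Mapping.keys mo \<subseteq> {..<n}"
    and mo: "mo \<in> Poly_Mapping.keys (p * q)" and x: "x \<in> Poly_Mapping.keys mo"
  obtain a b where ab: "mo = a + b" "a \<in> Poly_Mapping.keys p" "b \<in> Poly_Mapping.keys q"
    using keys_mult_sub[OF mo] by blast
  have "x \<in> Poly_Mapping.keys a \<union> Poly_Mapping.keys b" using x unfolding ab(1) by (rule subsetD[OF keys_add])
  moreover have "Poly_Mapping.keys a \<subseteq> {..<n}" using bspec[OF p ab(2)] .
  moreover have "Poly_Mapping.keys b \<subseteq> {..<n}" using bspec[OF q ab(3)] .
  ultimately show "x \<in> {..<n}" by blast
qed

lemma tdeg_mult: "tdeg (p * q) \<le> tdeg p + tdeg q"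
  unfolding tdeg_le_iff
proof
  fix mo assume "mo \<in> Poly_Mapping.keys (p * q)"
  then obtain a b where "mo = a + b" "a \<in> Poly_Mapping.keys p" "b \<in> Poly_Mapping.keys q"
    using keys_mult_sub by blast
  moreover have "mon_deg a \<le> tdeg p" if "a \<in> Poly_Mapping.keys p" for a
    using that tdeg_le_iff[of p "tdeg p"] by auto
  moreover have "mon_deg b \<le> tdeg q" if "b \<in> Poly_Mapping.keys q" for b
    using that tdeg_le_iff[of q "tdeg q"] by auto
  ultimately show "mon_deg mo \<le> tdeg p + tdeg q" by (simp add: mon_deg_add add_mono)
qed

definition Mons :: "nat \<Rightarrow> nat \<Rightarrow> (nat \<Rightarrow>\<^sub>0 nat) set" where
  "Mons n k = {mo. Poly_Mapping.keys mo \<subseteq> {..<n} \<and> mon_deg mo \<le> k}"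

lemma card_Mons: "card (Mons n k) = (k + n) choose n"
proof -
  have "bij_betw Poly_Mapping.lookup (Mons n k) (Fs n k)"
  proof (rule bij_betw_byWitness[where f' = Abs_poly_mapping])
    show "\<forall>a\<in>Mons n k. Abs_poly_mapping (Poly_Mapping.lookup a) = a"
      by (simp add: lookup_inverse)
    show "\<forall>a'\<in>Fs n k. Poly_Mapping.lookup (Abs_poly_mapping a') = a'"
    proof
      fix f assume "f \<in> Fs n k"
      then have "{i. f i \<noteq> 0} \<subseteq> {..<n}" by (auto simp: Fs_def not_less[symmetric])
      then have "finite {i. f i \<noteq> 0}" by (rule finite_subset) simp
      then show "Poly_Mapping.lookup (Abs_poly_mapping f) = f" by simp
    qed
    show "Poly_Mapping.lookup ` Mons n k \<subseteq> Fs n k"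
    proof clarify
      fix mo assume "mo \<in> Mons n k"
      then have 1: "Poly_Mapping.keys mo \<subseteq> {..<n}" "mon_deg mo \<le> k" by (auto simp: Mons_def)
      have "\<forall>i\<ge>n. Poly_Mapping.lookup mo i = 0"
        using 1(1) by (metis in_keys_iff lessThan_iff not_less subsetD)
      moreover have "(\<Sum>i<n. Poly_Mapping.lookup mo i) \<le> k"
        using 1 mon_deg_sum[of "{..<n}" mo] by simp
      ultimately show "Poly_Mapping.lookup mo \<in> Fs n k" by (simp add: Fs_def)
    qed
    show "Abs_poly_mapping ` Fs n k \<subseteq> Mons n k"
    proof clarify
      fix f assume f: "f \<in> Fs n k"
      then have "{i. f i \<noteq> 0} \<subseteq> {..<n}" by (auto simp: Fs_def not_less[symmetric])
      then have fin: "finite {i. f i \<noteq> 0}" by (rule finite_subset) simp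
      let ?mo = "Abs_poly_mapping f"
      have l: "Poly_Mapping.lookup ?mo = f" using fin by simp
      have k: "Poly_Mapping.keys ?mo \<subseteq> {..<n}"
        using f l by (auto simp: Fs_def in_keys_iff not_less[symmetric])
      have "mon_deg ?mo = (\<Sum>i<n. f i)" using mon_deg_sum[OF _ k] l by simp
      then show "?mo \<in> Mons n k" using k f by (simp add: Mons_def Fs_def)
    qed
  qed
  then show ?thesis using card_Fs bij_betw_same_card by metis
qed

lemma finite_Mons: "finite (Mons n k)"
proof -
  have "card (Mons n k) \<noteq> 0" using card_Mons by simp
  then show ?thesis by (meson card.infinite)
qed



lemma binom_ratio: "((N + n) choose n) * m ^ n \<le> ((m + n) choose n) * (N + n) ^ n"
proof (induction n)
  case 0
  then show ?case by simp
next
  case (Suc n)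
  have e1: "Suc (N + n) * ((N + n) choose n) = ((N + Suc n) choose Suc n) * Suc n"
    using Suc_times_binomial_eq[of "N + n" n] by simp
  have e2: "Suc (m + n) * ((m + n) choose n) = ((m + Suc n) choose Suc n) * Suc n"
    using Suc_times_binomial_eq[of "m + n" n] by simp
  have "((N + Suc n) choose Suc n) * m ^ Suc n * Suc n
      = (((N + Suc n) choose Suc n) * Suc n) * m * m ^ n"
    by (simp only: power_Suc ac_simps)
  also have "\<dots> = Suc (N + n) * m * (((N + n) choose n) * m ^ n)"
    unfolding e1[symmetric] by (simp only: ac_simps)
  also have "\<dots> \<le> Suc (N + n) * m * (((m + n) choose n) * (N + n) ^ n)"
    using Suc.IH by (intro mult_left_mono) auto
  also have "\<dots> = ((m + n) choose n) * (m * ((N + n) ^ n * Suc (N + n)))"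
    by (simp add: algebra_simps)
  also have "\<dots> \<le> ((m + n) choose n) * (Suc (m + n) * (Suc (N + n) ^ n * Suc (N + n)))"
  proof -
    have "(N + n) ^ n \<le> Suc (N + n) ^ n" by (intro power_mono) auto
    then have h1: "(N + n) ^ n * Suc (N + n) \<le> Suc (N + n) ^ n * Suc (N + n)" by (rule mult_right_mono) simp
    have h2: "m \<le> Suc (m + n)" by simp
    have "m * ((N + n) ^ n * Suc (N + n)) \<le> Suc (m + n) * (Suc (N + n) ^ n * Suc (N + n))"
      by (rule mult_mono[OF h2 h1]) simp_all
    then show ?thesis by (intro mult_left_mono) auto
  qed
  also have "\<dots> = (Suc (m + n) * ((m + n) choose n)) * (Suc (N + n) ^ n * Suc (N + n))"
    by (simp only: ac_simps)
  also have "\<dots> = ((m + Suc n) choose Suc n) * (N + Suc n) ^ Suc n * Suc n"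
    by (simp only: e2 power_Suc add_Suc_right ac_simps)
  finally show ?case by (simp only: mult_le_cancel2)
qed

lemma pow_bound:
  fixes D s :: real
  assumes "D \<ge> 1" "0 \<le> s" "s \<le> 1" "n \<ge> 1"
  shows "(D + s) ^ n \<le> D ^ n + s * D ^ (n - 1) * (2 ^ n - 1)"
  using assms(4)
proof (induction n rule: dec_induct)
  case base
  then show ?case by simp
next
  case (step k)
  have IH: "(D + s) ^ k \<le> D ^ k + s * D ^ (k - 1) * (2 ^ k - 1)" by (rule step.IH)
  have pk: "D ^ (k - 1) \<le> D ^ k" using assms(1) by (intro power_increasing) auto
  have g: "(2::real) ^ k \<ge> 1" by simp
  have "(D + s) ^ Suc k = (D + s) * (D + s) ^ k" by simp
  also have "\<dots> \<le> (D + s) * (D ^ k + s * D ^ (k - 1) * (2 ^ k - 1))"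
    using IH assms by (intro mult_left_mono) auto
  also have "\<dots> = D ^ Suc k + s * D ^ k + s * (D * D ^ (k - 1)) * (2 ^ k - 1) + s * s * D ^ (k - 1) * (2 ^ k - 1)"
    by (simp add: algebra_simps)
  also have "D * D ^ (k - 1) = D ^ k" using step.hyps by (cases k) auto
  also have "s * s * D ^ (k - 1) * (2 ^ k - 1) \<le> s * D ^ k * (2 ^ k - 1)"
  proof -
    have "s * s \<le> s" using assms by (simp add: mult_left_le)
    moreover have "D ^ (k - 1) \<le> D ^ k" by (rule pk)
    ultimately have "(s * s) * D ^ (k - 1) \<le> s * D ^ k"
      using assms by (intro mult_mono) auto
    then show ?thesis using g by (intro mult_right_mono) auto
  qed
  finally have "(D + s) ^ Suc k \<le> D ^ Suc k + s * D ^ k + s * D ^ k * (2 ^ k - 1) + s * D ^ k * (2 ^ k - 1)"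
    by simp
  also have "\<dots> = D ^ Suc k + s * D ^ (Suc k - 1) * (2 ^ Suc k - 1)"
    by (simp add: algebra_simps)
  finally show ?case .
qed

lemma final_arith:
  fixes r m n d D :: nat
  assumes "n > 0" "r > 0" "m > n + d" "r * m ^ n \<le> (D * m + d + n) ^ n"
  shows "int m * (int r - int D ^ n) < 2 ^ n * int D ^ (n - 1) * int (n + d)"
proof -
  define s :: real where "s = (n + d) / m"
  have m0: "real m > 0" using assms by simp
  have s0: "0 \<le> s" and s1: "s < 1" using assms m0 by (auto simp: s_def field_simps)
  have "real r * real m ^ n \<le> (real D * m + d + n) ^ n"
    using assms(4) by (metis of_nat_le_iff of_nat_add of_nat_mult of_nat_power)
  also have "real D * m + d + n = (D + s) * m" using m0 by (simp add: s_def field_simps)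
  finally have "real r * real m ^ n \<le> (D + s) ^ n * real m ^ n" by (simp add: power_mult_distrib)
  then have rle: "real r \<le> (D + s) ^ n" using m0 by simp
  show ?thesis
  proof (cases "D = 0")
    case True
    have "s ^ n < 1" using s0 s1 assms(1) by (simp add: power_less_one_iff)
    then show ?thesis using rle True assms(2) by simp
  next
    case False
    then have D1: "real D \<ge> 1" by simp
    have "real r \<le> real D ^ n + s * real D ^ (n - 1) * (2 ^ n - 1)"
      using rle pow_bound[OF D1 s0 less_imp_le[OF s1], of n] assms(1) by simp
    then have "real m * real r \<le> real m * (real D ^ n + s * real D ^ (n - 1) * (2 ^ n - 1))"
      using m0 by (intro mult_left_mono) auto
    also have "\<dots> = real m * real D ^ n + (n + d) * real D ^ (n - 1) * (2 ^ n - 1)"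
      using m0 by (simp add: s_def field_simps)
    also have "\<dots> < real m * real D ^ n + (n + d) * real D ^ (n - 1) * 2 ^ n"
    proof -
      have "real (n + d) * real D ^ (n - 1) > 0" using D1 assms(1) by simp
      then show ?thesis by (simp add: algebra_simps)
    qed
    finally have "real m * (real r - real D ^ n) < 2 ^ n * real D ^ (n - 1) * real (n + d)"
      by (simp add: algebra_simps)
    then have "real_of_int (int m * (int r - int D ^ n)) < real_of_int (2 ^ n * int D ^ (n - 1) * int (n + d))"
      by simp
    then show ?thesis by (simp only: of_int_less_iff)
  qed
qed



lemma lookup_const_mult: "Poly_Mapping.lookup (const_poly (s::'a::comm_semiring_1) * (p :: (nat \<Rightarrow>\<^sub>0 nat) \<Rightarrow>\<^sub>0 'a)) k = s * Poly_Mapping.lookup p k"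
  unfolding const_poly_def mult_map_scale_conv_mult[symmetric]
  by (simp add: Poly_Mapping.map.rep_eq when_def)

lemma polys_in_zero: "0 \<in> polys_in n"
  by (simp add: polys_in_def)

lemma polys_in_add: "p \<in> polys_in n \<Longrightarrow> q \<in> polys_in n \<Longrightarrow> p + q \<in> polys_in n"
  unfolding polys_in_def using keys_add[of p q] by blast

lemma polys_in_sum: "(\<And>x. x \<in> S \<Longrightarrow> f x \<in> polys_in n) \<Longrightarrow> sum f S \<in> polys_in n"
  by (induction S rule: infinite_finite_induct) (auto intro: polys_in_add polys_in_zero)

lemma polys_in_single: "Poly_Mapping.keys mo \<subseteq> {..<n} \<Longrightarrow> Poly_Mapping.single mo c \<in> polys_in n"
  by (simp add: polys_in_def)

lemma polys_in_const: "const_poly c \<in> polys_in n"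
  by (simp add: polys_in_def const_poly_def)

lemma single_as_const: "Poly_Mapping.single mo c = const_poly c * Poly_Mapping.single mo (1::'a::semiring_1)"
  by (simp add: const_poly_def mult_single)

lemma tdeg_Var_le: "i < n \<Longrightarrow> tdeg (\<phi> (Var i)) \<le> endo_deg n \<phi>"
  unfolding endo_deg_def by (rule Max_ge) auto

context
  fixes n :: nat and \<phi> :: "('a::field) mpoly \<Rightarrow> 'a mpoly"
  assumes E: "is_alg_endo n \<phi>"
begin

lemma phi_in: "p \<in> polys_in n \<Longrightarrow> \<phi> p \<in> polys_in n"
  using E by (simp add: is_alg_endo_def)

lemma phi_add: "p \<in> polys_in n \<Longrightarrow> q \<in> polys_in n \<Longrightarrow> \<phi> (p + q) = \<phi> p + \<phi> q"
  using E by (simp add: is_alg_endo_def)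

lemma phi_mult: "p \<in> polys_in n \<Longrightarrow> q \<in> polys_in n \<Longrightarrow> \<phi> (p * q) = \<phi> p * \<phi> q"
  using E by (simp add: is_alg_endo_def)

lemma phi_const: "\<phi> (const_poly c) = const_poly c"
  using E by (simp add: is_alg_endo_def)

lemma phi_zero: "\<phi> 0 = 0"
  using phi_const[of 0] by (simp add: const_poly_def)

lemma phi_sum: "(\<And>x. x \<in> S \<Longrightarrow> f x \<in> polys_in n) \<Longrightarrow> \<phi> (sum f S) = (\<Sum>x\<in>S. \<phi> (f x))"
proof (induction S rule: infinite_finite_induct)
  case (infinite A)
  then show ?case by (simp add: phi_zero)
next
  case empty
  then show ?case by (simp add: phi_zero)
next
  case (insert x F)
  then show ?case by (simp add: phi_add polys_in_sum)
qed

lemma phi_single: "Poly_Mapping.keys mo \<subseteq> {..<n} \<Longrightarrow>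
   \<phi> (Poly_Mapping.single mo c) = const_poly c * \<phi> (Poly_Mapping.single mo 1)"
  by (subst single_as_const) (simp add: phi_mult polys_in_const polys_in_single phi_const)

lemma phi_mono: "Poly_Mapping.keys mo \<subseteq> {..<n} \<Longrightarrow>
   \<phi> (Poly_Mapping.single mo 1) \<in> polys_in n \<and>
   tdeg (\<phi> (Poly_Mapping.single mo 1)) \<le> endo_deg n \<phi> * mon_deg mo"
proof (induction "mon_deg mo" arbitrary: mo)
  case 0
  have "mo = 0"
  proof (rule poly_mapping_eqI)
    fix i
    show "Poly_Mapping.lookup mo i = Poly_Mapping.lookup 0 i"
    proof (cases "i \<in> Poly_Mapping.keys mo")
      case True
      have "Poly_Mapping.lookup mo i \<le> mon_deg mo"
        unfolding mon_deg_def using True by (intro member_le_sum) auto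
      then show ?thesis using 0 by simp
    next
      case False
      then show ?thesis by (simp add: in_keys_iff)
    qed
  qed
  then have "Poly_Mapping.single mo (1::'a) = const_poly 1" by (simp add: const_poly_def)
  then have "\<phi> (Poly_Mapping.single mo 1) = const_poly 1" by (simp add: phi_const)
  then show ?case
    by (simp add: tdeg_le_iff const_poly_def mon_deg_def polys_in_def)
next
  case (Suc k mo)
  from Suc.hyps(2) have "Poly_Mapping.keys mo \<noteq> {}" by (auto simp: mon_deg_def)
  then obtain i where i: "i \<in> Poly_Mapping.keys mo" by blast
  then have iN: "i < n" using Suc.prems by auto
  have li: "Poly_Mapping.lookup mo i \<ge> 1" using i by (simp add: in_keys_iff)
  define mo' where "mo' = Poly_Mapping.update i (Poly_Mapping.lookup mo i - 1) mo"
  have split: "mo = mo' + Poly_Mapping.single i 1"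
    by (rule poly_mapping_eqI) (use li in \<open>auto simp: mo'_def lookup_add lookup_update lookup_single when_def\<close>)
  have keys': "Poly_Mapping.keys mo' \<subseteq> {..<n}"
    using Suc.prems i by (auto simp: mo'_def keys_update)
  have "mon_deg mo = mon_deg mo' + 1" using split mon_deg_add mon_deg_single by metis
  then have k: "k = mon_deg mo'" using Suc.hyps(2) by simp
  from Suc.hyps(1)[OF k keys'] have IH:
    "\<phi> (Poly_Mapping.single mo' 1) \<in> polys_in n"
    "tdeg (\<phi> (Poly_Mapping.single mo' 1)) \<le> endo_deg n \<phi> * mon_deg mo'" by auto
  have Vin: "Var i \<in> polys_in n" using iN by (simp add: Var_def polys_in_def)
  have eq: "Poly_Mapping.single mo (1::'a) = Poly_Mapping.single mo' 1 * Var i"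
    by (simp add: Var_def mult_single split)
  have ph: "\<phi> (Poly_Mapping.single mo 1) = \<phi> (Poly_Mapping.single mo' 1) * \<phi> (Var i)"
    unfolding eq by (rule phi_mult[OF polys_in_single[OF keys'] Vin])
  have "tdeg (\<phi> (Poly_Mapping.single mo 1)) \<le> tdeg (\<phi> (Poly_Mapping.single mo' 1)) + tdeg (\<phi> (Var i))"
    unfolding ph by (rule tdeg_mult)
  also have "\<dots> \<le> endo_deg n \<phi> * mon_deg mo' + endo_deg n \<phi>"
    using IH(2) tdeg_Var_le[OF iN, of \<phi>] by simp
  also have "\<dots> = endo_deg n \<phi> * mon_deg mo" using \<open>mon_deg mo = mon_deg mo' + 1\<close> by simp
  finally show ?case unfolding ph using polys_in_mult[OF IH(1) phi_in[OF Vin]] by simp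
qed

end


lemma keys_polys_le: "p \<in> polys_le n k \<Longrightarrow> mo \<in> Poly_Mapping.keys p \<Longrightarrow> mo \<in> Mons n k"
  unfolding polys_le_def polys_in_def Mons_def using tdeg_le_iff by blast

theorem lemma4p1:
  fixes \<phi> :: "('a::field) mpoly \<Rightarrow> 'a mpoly"
    and n d r m :: nat
    and h :: "nat \<Rightarrow> 'a mpoly"
  assumes "n > 0"
    and "is_alg_endo n \<phi>"
    and "r > 0"
    and "\<forall>i<r. h i \<in> polys_le n d"
    and "m > n + d"
    and "\<forall>b :: nat \<Rightarrow> 'a mpoly.
           (\<forall>i<r. b i \<in> polys_le n m) \<and> (\<Sum>i<r. \<phi> (b i) * h i) = 0
           \<longrightarrow> (\<forall>i<r. b i = 0)"
  shows "int m * (int r - int (endo_deg n \<phi>) ^ n)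
           < 2 ^ n * int (endo_deg n \<phi>) ^ (n - 1) * int (n + d)"
proof -
  note E = assms(2)
  define D where "D = endo_deg n \<phi>"
  define N where "N = D * m + d"
  define mono :: "(nat \<Rightarrow>\<^sub>0 nat) \<Rightarrow> 'a mpoly" where "mono = (\<lambda>al. Poly_Mapping.single al 1)"
  define U where "U = {..<r} \<times> Mons n m"
  define A where "A = (\<lambda>be (ia :: nat \<times> (nat \<Rightarrow>\<^sub>0 nat)).
      Poly_Mapping.lookup (\<phi> (mono (snd ia)) * h (fst ia)) be)"
  have prodle: "\<phi> (mono al) * h i \<in> polys_le n N" if "i < r" "al \<in> Mons n m" for i al
  proof -
    have al: "Poly_Mapping.keys al \<subseteq> {..<n}" "mon_deg al \<le> m" using that(2) by (auto simp: Mons_def)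
    note pm = phi_mono[OF E al(1)]
    have hi: "h i \<in> polys_in n" "tdeg (h i) \<le> d" using assms(4) that(1) by (auto simp: polys_le_def)
    have "tdeg (\<phi> (mono al) * h i) \<le> tdeg (\<phi> (mono al)) + tdeg (h i)" by (rule tdeg_mult)
    also have "\<dots> \<le> D * mon_deg al + d" using pm hi by (simp add: mono_def D_def)
    also have "\<dots> \<le> N" using al(2) by (simp add: N_def)
    moreover have "\<phi> (mono al) * h i \<in> polys_in n"
      using polys_in_mult[OF conjunct1[OF pm] hi(1)] by (simp add: mono_def)
    ultimately show ?thesis by (simp add: polys_le_def)
  qed
  have card_le: "r * card (Mons n m) \<le> card (Mons n N)"
  proof (rule ccontr)
    assume "\<not> ?thesis"
    then have "card (Mons n N) < card U" by (simp add: U_def card_cartesian_product)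
    from lin_solve[OF finite_Mons _ this, of A] obtain c where
      c: "\<exists>u\<in>U. c u \<noteq> 0" "\<forall>e\<in>Mons n N. (\<Sum>u\<in>U. A e u * c u) = 0"
      by (auto simp: U_def finite_Mons)
    define b where "b = (\<lambda>i. \<Sum>al\<in>Mons n m. Poly_Mapping.single al (c (i, al)))"
    have lb: "Poly_Mapping.lookup (b i) al = c (i, al)" if "al \<in> Mons n m" for i al
      using that finite_Mons by (simp add: b_def lookup_sum lookup_single when_def)
    have bin: "b i \<in> polys_le n m" for i
    proof -
      have "Poly_Mapping.keys (b i) \<subseteq> Mons n m"
        using keys_sum[of "\<lambda>al. Poly_Mapping.single al (c (i, al))" "Mons n m"]
        unfolding b_def by auto
      then show ?thesis by (auto simp: polys_le_def polys_in_def tdeg_le_iff Mons_def)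
    qed
    have phib: "\<phi> (b i) = (\<Sum>al\<in>Mons n m. const_poly (c (i, al)) * \<phi> (mono al))" for i
    proof -
      have "\<phi> (b i) = (\<Sum>al\<in>Mons n m. \<phi> (Poly_Mapping.single al (c (i, al))))"
        unfolding b_def by (rule phi_sum[OF E]) (simp add: Mons_def polys_in_single)
      also have "\<dots> = (\<Sum>al\<in>Mons n m. const_poly (c (i, al)) * \<phi> (mono al))"
      proof (rule sum.cong[OF refl])
        fix al assume "al \<in> Mons n m"
        then have "Poly_Mapping.keys al \<subseteq> {..<n}" by (simp add: Mons_def)
        then show "\<phi> (Poly_Mapping.single al (c (i, al))) = const_poly (c (i, al)) * \<phi> (mono al)"
          unfolding mono_def by (rule phi_single[OF E])
      qed
      finally show ?thesis .
    qed
    define P where "P = (\<Sum>i<r. \<phi> (b i) * h i)"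
    have lP: "Poly_Mapping.lookup P be =
       (\<Sum>i<r. \<Sum>al\<in>Mons n m. c (i, al) * Poly_Mapping.lookup (\<phi> (mono al) * h i) be)" for be
      unfolding P_def phib
      by (simp add: lookup_sum sum_distrib_right mult.assoc lookup_const_mult)
    have "P = 0"
    proof (rule poly_mapping_eqI)
      fix be
      show "Poly_Mapping.lookup P be = Poly_Mapping.lookup 0 be"
      proof (cases "be \<in> Mons n N")
        case True
        have "Poly_Mapping.lookup P be = (\<Sum>u\<in>U. A be u * c u)"
          unfolding lP U_def sum.cartesian_product
          by (rule sum.cong) (auto simp: A_def mult.commute)
        then show ?thesis using c(2) True by simp
      next
        case False
        have "Poly_Mapping.lookup (\<phi> (mono al) * h i) be = 0" if "i < r" "al \<in> Mons n m" for i al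
          using keys_polys_le[OF prodle[OF that]] False by (auto simp: in_keys_iff)
        then show ?thesis unfolding lP by simp
      qed
    qed
    then have "(\<forall>i<r. b i \<in> polys_le n m) \<and> (\<Sum>i<r. \<phi> (b i) * h i) = 0"
      using bin by (simp add: P_def)
    then have "\<forall>i<r. b i = 0" by (rule mp[OF spec[OF assms(6)]])
    then have "c u = 0" if "u \<in> U" for u
    proof -
      obtain i al where u: "u = (i, al)" "i < r" "al \<in> Mons n m" using \<open>u \<in> U\<close> by (auto simp: U_def)
      have "c u = Poly_Mapping.lookup (b i) al" using lb[OF u(3)] u(1) by simp
      also have "\<dots> = 0" using \<open>\<forall>i<r. b i = 0\<close> u(2) by simp
      finally show ?thesis .
    qed
    then show False using c(1) by blast
  qed
  have "r * ((m + n) choose n) * m ^ n \<le> ((N + n) choose n) * m ^ n"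
    using card_le by (simp add: card_Mons)
  also have "\<dots> \<le> ((m + n) choose n) * (N + n) ^ n" by (rule binom_ratio)
  finally have "((m + n) choose n) * (r * m ^ n) \<le> ((m + n) choose n) * (N + n) ^ n"
    by (simp add: ac_simps)
  then have "r * m ^ n \<le> (D * m + d + n) ^ n" by (simp add: N_def)
  from final_arith[OF assms(1) assms(3) assms(5) this] show ?thesis by (simp add: D_def)
qed


end
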